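(* Let $\kappa$ be a regular uncountable cardinal and $I$ an ideal on $\kappa$ with $I\subseteq NS_\kappa$, and let $L=\{\lambda+1:\lambda<\kappa\text{ a limit ordinal}\}$. Suppose $L\in P(I)$. Then for every stationary set $Q\subseteq\kappa$ consisting of limit ordinals there is $Y\subseteq L$ with $Y\in I$, $B(Y)\subseteq Q$, and $B(Y)$ stationary, where $B(Y)=\{\lambda:\lambda+1\in Y\}$.
   Context: An ideal on $\kappa$ is a family of subsets of $\kappa$ closed under subsets and finite unions, which is $<\kappa$-complete and contains all singletons. $NS_\kappa$ is the ideal of nonstationary subsets of $\kappa$. For $A\subseteq\kappa$ and $X_\alpha\subseteq\kappa$, $\bigtriangledown_{\alpha\in A}X_\alpha=\{\xi<\kappa:\exists\alpha<\xi\,(\alpha\in A\wedge \xi\in X_\alpha)\}$. An ideal is pleasant if whenever $A$ and all $X_\alpha$ belong to it, so does $\bigtriangledown_{\alpha\in A}X_\alpha$. The pleasant closure $P(I)$ is built in stages: $P_0(I)=I$; $P_{\beta+1}(I)$ is the ideal generated by $P_\beta(I)$ together with all $\bigtriangledown_{\alpha\in T}X_\alpha$ with $T\in I$ and each $X_\alpha\in P_\beta(I)$; unions at limit stages; $P(I)=\bigcup_\beta P_\beta(I)$ (the smallest pleasant ideal containing $I$). *)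

theory Defs
  imports Main "HOL-Library.Equipollence" "HOL-Library.Countable_Set"
begin

(* kappa is modelled as a well-ordered type 'a: its elements are the ordinals < kappa. *)

definition succ_ord :: "'a::wellorder \<Rightarrow> 'a" where
  "succ_ord x = (LEAST y. x < y)"

definition is_limit :: "'a::wellorder \<Rightarrow> bool" where
  "is_limit x \<longleftrightarrow> (\<exists>y. y < x) \<and> (\<forall>y<x. \<exists>z. y < z \<and> z < x)"

definition unbounded :: "'a::wellorder set \<Rightarrow> bool" where
  "unbounded C \<longleftrightarrow> (\<forall>a. \<exists>b\<in>C. a < b)"

definition closed_set :: "'a::wellorder set \<Rightarrow> bool" where
  "closed_set C \<longleftrightarrow> (\<forall>l. is_limit l \<and> (\<forall>a<l. \<exists>b\<in>C. a < b \<and> b < l) \<longrightarrow> l \<in> C)"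

definition club :: "'a::wellorder set \<Rightarrow> bool" where
  "club C \<longleftrightarrow> closed_set C \<and> unbounded C"

definition stationary :: "'a::wellorder set \<Rightarrow> bool" where
  "stationary S \<longleftrightarrow> (\<forall>C. club C \<longrightarrow> S \<inter> C \<noteq> {})"

definition NS :: "'a::wellorder set set" where
  "NS = {S. \<not> stationary S}"

definition ideal_on :: "'a::wellorder set set \<Rightarrow> bool" where
  "ideal_on I \<longleftrightarrow>
     (\<forall>A\<in>I. \<forall>B. B \<subseteq> A \<longrightarrow> B \<in> I) \<and>
     (\<forall>A\<in>I. \<forall>B\<in>I. A \<union> B \<in> I) \<and>
     (\<forall>F. F \<subseteq> I \<and> F \<prec> (UNIV :: 'a set) \<longrightarrow> \<Union>F \<in> I) \<and>
     (\<forall>x. {x} \<in> I)"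

definition diag_union :: "'a::wellorder set \<Rightarrow> ('a \<Rightarrow> 'a set) \<Rightarrow> 'a set" where
  "diag_union A X = {\<xi>. \<exists>a. a < \<xi> \<and> a \<in> A \<and> \<xi> \<in> X a}"

(* pleasant closure P(I): least family containing I, closed under the ideal-generating
   operations and under diagonal unions indexed by sets in I of members of the family;
   this equals the union of the transfinite stages P_beta(I). *)
inductive_set pcl :: "'a::wellorder set set \<Rightarrow> 'a set set" for I where
  base: "A \<in> I \<Longrightarrow> A \<in> pcl I"
| sub: "A \<in> pcl I \<Longrightarrow> B \<subseteq> A \<Longrightarrow> B \<in> pcl I"
| un2: "A \<in> pcl I \<Longrightarrow> B \<in> pcl I \<Longrightarrow> A \<union> B \<in> pcl I"
| un: "F \<prec> (UNIV :: 'a set) \<Longrightarrow> (\<forall>A\<in>F. A \<in> pcl I) \<Longrightarrow> \<Union>F \<in> pcl I"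
| diag: "T \<in> I \<Longrightarrow> (\<forall>a\<in>T. X a \<in> pcl I) \<Longrightarrow> diag_union T X \<in> pcl I"

definition Lset :: "'a::wellorder set" where
  "Lset = {succ_ord l | l. is_limit l}"

definition Bset :: "'a::wellorder set \<Rightarrow> 'a set" where
  "Bset Y = {l. succ_ord l \<in> Y}"

end

theory Submission
  imports Defs
begin

definition KAPPA :: "'a::wellorder itself \<Rightarrow> bool" where
  "KAPPA t \<longleftrightarrow> uncountable (UNIV :: 'a set) \<and> (\<forall>x::'a. {..<x} \<prec> (UNIV :: 'a set))
    \<and> (\<forall>A::'a set. A \<prec> (UNIV :: 'a set) \<longrightarrow> (\<exists>x. \<forall>y\<in>A. y < x))"

lemma K_bound:
  assumes "KAPPA TYPE('a::wellorder)" "(A::'a set) \<prec> (UNIV :: 'a set)"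
  shows "\<exists>x. \<forall>y\<in>A. y < x"
  using assms unfolding KAPPA_def by blast

lemma K_no_max:
  assumes "KAPPA TYPE('a::wellorder)"
  shows "\<exists>y. (x::'a) < y"
proof -
  have "infinite (UNIV::'a set)" using assms unfolding KAPPA_def
    using countable_finite by blast
  then have "{x} \<prec> (UNIV::'a set)" by (simp add: finite_lesspoll_infinite)
  then show ?thesis using K_bound[OF assms] by blast
qed

lemma succ_gt:
  assumes "KAPPA TYPE('a::wellorder)"
  shows "(x::'a) < succ_ord x"
  unfolding succ_ord_def using K_no_max[OF assms, of x] by (metis LeastI)

lemma succ_le:
  assumes "KAPPA TYPE('a::wellorder)" "(y::'a) < succ_ord x"
  shows "y \<le> x"
  using assms(2) unfolding succ_ord_def by (metis not_le_imp_less not_less_Least)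

lemma succ_inj:
  assumes "KAPPA TYPE('a::wellorder)" "succ_ord (x::'a) = succ_ord y"
  shows "x = y"
  by (metis assms antisym succ_gt succ_le)

lemma K_countable:
  assumes "KAPPA TYPE('a::wellorder)"
  shows "range (s::nat \<Rightarrow> 'a) \<prec> (UNIV :: 'a set)"
proof -
  have u: "uncountable (UNIV::'a set)" using assms unfolding KAPPA_def by blast
  have "(UNIV::nat set) \<prec> (UNIV::'a set)"
    unfolding lesspoll_def
  proof
    show "(UNIV::nat set) \<lesssim> (UNIV::'a set)" using u infinite_le_lepoll countable_finite by blast
    show "\<not> (UNIV::nat set) \<approx> (UNIV::'a set)"
      using u countable_eqpoll[of "UNIV::nat set" "UNIV::'a set"] eqpoll_sym by blast
  qed
  then show ?thesis using image_lepoll lesspoll_trans1 by blast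
qed

lemma K_atMost:
  assumes "KAPPA TYPE('a::wellorder)"
  shows "{..(x::'a)} \<prec> (UNIV :: 'a set)"
proof -
  have "{..x} = {..<succ_ord x}" using succ_gt[OF assms] succ_le[OF assms]
    by (auto intro: le_less_trans)
  then show ?thesis using assms unfolding KAPPA_def by simp
qed

lemma club_UNIV:
  assumes "KAPPA TYPE('a::wellorder)"
  shows "club (UNIV::'a set)"
  unfolding club_def closed_set_def unbounded_def using K_no_max[OF assms] by auto

lemma stat_nonempty:
  assumes "KAPPA TYPE('a::wellorder)" "stationary (S::'a set)"
  shows "S \<noteq> {}"
  using assms club_UNIV unfolding stationary_def by blast

lemma stat_mono: "stationary S \<Longrightarrow> S \<subseteq> S' \<Longrightarrow> stationary S'"
  unfolding stationary_def by blast

lemma sup_seq: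
  assumes "KAPPA TYPE('a::wellorder)" "\<And>n. (s::nat \<Rightarrow> 'a) n < s (Suc n)"
  obtains l where "\<And>n. s n < l" "\<And>b. b < l \<Longrightarrow> \<exists>n. b \<le> s n" "is_limit l"
proof -
  obtain x where x: "\<forall>n. s n < x" using K_bound[OF assms(1) K_countable[OF assms(1), of s]] by blast
  define l where "l = (LEAST x. \<forall>n. s n < x)"
  have 1: "\<And>n. s n < l" unfolding l_def using LeastI[of "\<lambda>x. \<forall>n. s n < x" x] x by blast
  have 2: "\<exists>n. b \<le> s n" if "b < l" for b
  proof (rule ccontr)
    assume "\<not> ?thesis"
    then have "\<forall>n. s n < b" by (simp add: not_le)
    then have "l \<le> b" unfolding l_def by (rule Least_le)
    then show False using that by simp
  qed
  have 3: "is_limit l"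
    unfolding is_limit_def
  proof (intro conjI allI impI)
    show "\<exists>y. y < l" using 1 by blast
    fix y assume "y < l"
    then obtain n where "y \<le> s n" using 2 by blast
    then have "y < s (Suc n)" using assms(2)[of n] by simp
    then show "\<exists>z>y. z < l" using 1[of "Suc n"] by blast
  qed
  show ?thesis using 1 2 3 that by blast
qed

lemma diag_club:
  assumes K: "KAPPA TYPE('a::wellorder)" and C: "\<And>a. club ((C::'a \<Rightarrow> 'a set) a)"
  shows "club {\<xi>. \<beta> < \<xi> \<and> (\<forall>a<\<xi>. \<xi> \<in> C a)}" (is "club ?D")
proof -
  have "closed_set ?D"
    unfolding closed_set_def
  proof (intro allI impI)
    fix l assume l: "is_limit l \<and> (\<forall>a<l. \<exists>b\<in>?D. a < b \<and> b < l)"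
    then obtain y where "y < l" unfolding is_limit_def by blast
    then obtain b where b: "b \<in> ?D" "b < l" using l by blast
    have "\<beta> < l" using b by auto
    moreover have "l \<in> C a" if "a < l" for a
    proof -
      have "closed_set (C a)" using C club_def by blast
      moreover have "\<forall>a'<l. \<exists>b\<in>C a. a' < b \<and> b < l"
      proof (intro allI impI)
        fix a' assume "a' < l"
        then have "max a a' < l" using that by simp
        then obtain b where "b \<in> ?D" "max a a' < b" "b < l" using l by blast
        then show "\<exists>b\<in>C a. a' < b \<and> b < l" by auto
      qed
      ultimately show ?thesis using l unfolding closed_set_def by blast
    qed
    ultimately show "l \<in> ?D" by blast
  qed
  moreover have "unbounded ?D"
    unfolding unbounded_def
  proof
    fix a0
    have ex: "\<exists>y. x < y \<and> (\<forall>b\<le>x. \<exists>c\<in>C b. x < c \<and> c < y)" for x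
    proof -
      have "\<forall>b. \<exists>c\<in>C b. x < c" using C unfolding club_def unbounded_def by blast
      then obtain c where c: "\<And>b. c b \<in> C b \<and> x < c b" by metis
      have "c ` {..x} \<prec> (UNIV::'a set)"
        using image_lepoll lesspoll_trans1 K_atMost[OF K] by blast
      then obtain z where z: "\<forall>y\<in>c ` {..x}. y < z" using K_bound[OF K] by blast
      have cz: "c b < z" if "b \<le> x" for b
      proof -
        have "c b \<in> c ` {..x}" using that by simp
        then show ?thesis using z by blast
      qed
      have "x < z" using cz[of x] c[of x] by (meson less_trans order_refl)
      moreover have "\<forall>b\<le>x. \<exists>c'\<in>C b. x < c' \<and> c' < z"
      proof (intro allI impI)
        fix b assume "b \<le> x"
        then show "\<exists>c'\<in>C b. x < c' \<and> c' < z" using cz[of b] c[of b] by blast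
      qed
      ultimately show ?thesis by blast
    qed
    define nx where "nx x = (SOME y. x < y \<and> (\<forall>b\<le>x. \<exists>c\<in>C b. x < c \<and> c < y))" for x
    have nx: "x < nx x \<and> (\<forall>b\<le>x. \<exists>c\<in>C b. x < c \<and> c < nx x)" for x
      unfolding nx_def using ex[of x] by (rule someI_ex)
    define s where "s n = (nx ^^ n) (max a0 \<beta>)" for n
    have sS: "s (Suc n) = nx (s n)" for n unfolding s_def by simp
    have inc: "s n < s (Suc n)" for n using nx sS by simp
    then have mono: "mono s" by (simp add: mono_iff_le_Suc order_less_imp_le)
    obtain l where l1: "\<And>n. s n < l" and l2: "\<And>b. b < l \<Longrightarrow> \<exists>n. b \<le> s n" and l3: "is_limit l"
      using sup_seq[of s, OF K inc] by blast
    have s0: "s 0 = max a0 \<beta>" unfolding s_def by simp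
    have "l \<in> ?D"
    proof -
      have "\<beta> < l" using l1[of 0] s0 by simp
      moreover have "l \<in> C a" if "a < l" for a
      proof -
        have "\<forall>a'<l. \<exists>b\<in>C a. a' < b \<and> b < l"
        proof (intro allI impI)
          fix a' assume "a' < l"
          obtain n1 where "a \<le> s n1" using l2 \<open>a < l\<close> by blast
          obtain n2 where "a' \<le> s n2" using l2 \<open>a' < l\<close> by blast
          let ?n = "max n1 n2"
          have "a \<le> s ?n" "a' \<le> s ?n"
          proof -
            have "s n1 \<le> s ?n" "s n2 \<le> s ?n" using mono by (simp_all add: monoD)
            then show "a \<le> s ?n" "a' \<le> s ?n" using \<open>a \<le> s n1\<close> \<open>a' \<le> s n2\<close> by simp_all
          qed
          then obtain c where "c \<in> C a" "s ?n < c" "c < s (Suc ?n)"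
            using nx[of "s ?n"] sS by auto
          then show "\<exists>b\<in>C a. a' < b \<and> b < l"
          proof -
            have "a' < c" using \<open>a' \<le> s ?n\<close> \<open>s ?n < c\<close> by simp
            moreover have "c < l" using \<open>c < s (Suc ?n)\<close> l1[of "Suc ?n"] by simp
            ultimately show ?thesis using \<open>c \<in> C a\<close> by blast
          qed
        qed
        then show ?thesis using C l3 unfolding club_def closed_set_def by blast
      qed
      ultimately show ?thesis by blast
    qed
    moreover have "a0 < l" using l1[of 0] s0 by simp
    ultimately show "\<exists>b\<in>?D. a0 < b" by blast
  qed
  ultimately show ?thesis unfolding club_def by blast
qed

lemma fodor:
  assumes K: "KAPPA TYPE('a::wellorder)" and S: "stationary (S::'a set)"
    and f: "\<And>\<xi>. \<xi> \<in> S \<Longrightarrow> \<beta> < \<xi> \<Longrightarrow> f \<xi> < \<xi>"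
  shows "\<exists>a. stationary {\<xi>\<in>S. f \<xi> = a}"
proof (rule ccontr)
  assume "\<not> ?thesis"
  then have "\<forall>a. \<exists>C. club C \<and> {\<xi>\<in>S. f \<xi> = a} \<inter> C = {}" unfolding stationary_def by blast
  then obtain C where C: "\<And>a. club (C a) \<and> {\<xi>\<in>S. f \<xi> = a} \<inter> C a = {}" by metis
  have "club {\<xi>. \<beta> < \<xi> \<and> (\<forall>a<\<xi>. \<xi> \<in> C a)}" using diag_club[OF K] C by blast
  then obtain \<xi> where "\<xi> \<in> S" "\<beta> < \<xi>" "\<forall>a<\<xi>. \<xi> \<in> C a" using S unfolding stationary_def by blast
  then show False using f C by blast
qed

lemma stat_un2:
  assumes K: "KAPPA TYPE('a::wellorder)" and S: "stationary ((A::'a set) \<union> B)"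
  shows "stationary A \<or> stationary B"
proof -
  fix x :: 'a
  define f where "f q = (if q \<in> A then x else succ_ord x)" for q
  have "\<exists>a. stationary {\<xi>\<in>A \<union> B. f \<xi> = a}"
    apply (rule fodor[OF K S, of "succ_ord x"])
    unfolding f_def using succ_gt[OF K, of x] by auto
  then obtain a where a: "stationary {\<xi>\<in>A \<union> B. f \<xi> = a}" by blast
  show ?thesis
  proof (cases "a = x")
    case True
    then have "{\<xi>\<in>A \<union> B. f \<xi> = a} \<subseteq> A" unfolding f_def using succ_gt[OF K, of x] by auto
    then show ?thesis using a stat_mono by blast
  next
    case False
    then have "{\<xi>\<in>A \<union> B. f \<xi> = a} \<subseteq> B" unfolding f_def by auto
    then show ?thesis using a stat_mono by blast
  qed
qed

definition PHI :: "'a::wellorder set set \<Rightarrow> 'a set \<Rightarrow> bool" where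
  "PHI I A \<longleftrightarrow> (\<forall>Q. stationary Q \<and> (\<forall>q\<in>Q. succ_ord q \<in> A) \<longrightarrow> (\<exists>Y\<in>I. stationary (Bset Y \<inter> Q)))"

lemma main_ind:
  assumes K: "KAPPA TYPE('a::wellorder)" and INS: "I \<subseteq> NS" and A: "(A::'a set) \<in> pcl I"
  shows "PHI I A"
  using A
proof (induction rule: pcl.induct)
  case (base A)
  show ?case unfolding PHI_def
  proof (intro allI impI)
    fix Q assume Q: "stationary Q \<and> (\<forall>q\<in>Q. succ_ord q \<in> A)"
    then have "Bset A \<inter> Q = Q" unfolding Bset_def by auto
    then have "stationary (Bset A \<inter> Q)" using Q by simp
    then show "\<exists>Y\<in>I. stationary (Bset Y \<inter> Q)" using base by blast
  qed
next
  case (sub A B)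
  then show ?case unfolding PHI_def by blast
next
  case (un2 A B)
  show ?case unfolding PHI_def
  proof (intro allI impI)
    fix Q assume Q: "stationary Q \<and> (\<forall>q\<in>Q. succ_ord q \<in> A \<union> B)"
    have "Q \<subseteq> {q\<in>Q. succ_ord q \<in> A} \<union> {q\<in>Q. succ_ord q \<in> B}" using Q by blast
    then have "stationary ({q\<in>Q. succ_ord q \<in> A} \<union> {q\<in>Q. succ_ord q \<in> B})"
      using stat_mono Q by blast
    then have "stationary {q\<in>Q. succ_ord q \<in> A} \<or> stationary {q\<in>Q. succ_ord q \<in> B}"
      using stat_un2[OF K] by blast
    then show "\<exists>Y\<in>I. stationary (Bset Y \<inter> Q)"
    proof
      assume "stationary {q\<in>Q. succ_ord q \<in> A}"
      then obtain Y where Y: "Y \<in> I" "stationary (Bset Y \<inter> {q\<in>Q. succ_ord q \<in> A})"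
        using un2.IH(1) unfolding PHI_def by blast
      have "Bset Y \<inter> {q\<in>Q. succ_ord q \<in> A} \<subseteq> Bset Y \<inter> Q" by blast
      then show ?thesis using stat_mono Y by blast
    next
      assume "stationary {q\<in>Q. succ_ord q \<in> B}"
      then obtain Y where Y: "Y \<in> I" "stationary (Bset Y \<inter> {q\<in>Q. succ_ord q \<in> B})"
        using un2.IH(2) unfolding PHI_def by blast
      have "Bset Y \<inter> {q\<in>Q. succ_ord q \<in> B} \<subseteq> Bset Y \<inter> Q" by blast
      then show ?thesis using stat_mono Y by blast
    qed
  qed
next
  case (un F)
  show ?case unfolding PHI_def
  proof (intro allI impI)
    fix Q assume Q: "stationary Q \<and> (\<forall>q\<in>Q. succ_ord q \<in> \<Union>F)"
    have "F \<lesssim> (UNIV::'a set)" using un.hyps by (rule lesspoll_imp_lepoll)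
    then obtain g :: "'a set \<Rightarrow> 'a" where g: "inj_on g F" unfolding lepoll_def by blast
    have "g ` F \<prec> (UNIV::'a set)" by (rule lesspoll_trans1[OF image_lepoll un.hyps])
    then obtain \<beta> where \<beta>: "\<forall>y\<in>g ` F. y < \<beta>" using K_bound[OF K] by blast
    have "\<forall>q\<in>Q. \<exists>A. A \<in> F \<and> succ_ord q \<in> A" using Q by blast
    then have "\<exists>h. \<forall>q\<in>Q. h q \<in> F \<and> succ_ord q \<in> h q" by (rule bchoice)
    then obtain h where h0: "\<forall>q\<in>Q. h q \<in> F \<and> succ_ord q \<in> h q" by blast
    then have h: "\<And>q. q \<in> Q \<Longrightarrow> h q \<in> F \<and> succ_ord q \<in> h q" by blast
    have "\<exists>a. stationary {\<xi>\<in>Q. g (h \<xi>) = a}"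
    proof (rule fodor[OF K _, of Q \<beta>])
      show "stationary Q" using Q by blast
      fix \<xi> assume "\<xi> \<in> Q" "\<beta> < \<xi>"
      then have "g (h \<xi>) \<in> g ` F" using h by blast
      then have "g (h \<xi>) < \<beta>" using \<beta> by blast
      then show "g (h \<xi>) < \<xi>" using \<open>\<beta> < \<xi>\<close> by (rule less_trans)
    qed
    then obtain a where a: "stationary {\<xi>\<in>Q. g (h \<xi>) = a}" by blast
    then obtain q0 where q0: "q0 \<in> {\<xi>\<in>Q. g (h \<xi>) = a}" using stat_nonempty[OF K] by blast
    have sub: "\<forall>q\<in>{\<xi>\<in>Q. g (h \<xi>) = a}. succ_ord q \<in> h q0"
    proof
      fix q assume q: "q \<in> {\<xi>\<in>Q. g (h \<xi>) = a}"
      then have "h q = h q0" using q0 h g unfolding inj_on_def by auto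
      then show "succ_ord q \<in> h q0" using h q by auto
    qed
    have "PHI I (h q0)" using un.IH h q0 by auto
    then obtain Y where Y: "Y \<in> I" "stationary (Bset Y \<inter> {\<xi>\<in>Q. g (h \<xi>) = a})"
      using a sub unfolding PHI_def by blast
    have "Bset Y \<inter> {\<xi>\<in>Q. g (h \<xi>) = a} \<subseteq> Bset Y \<inter> Q" by blast
    then show "\<exists>Y\<in>I. stationary (Bset Y \<inter> Q)" using stat_mono Y by blast
  qed
next
  case (diag T X)
  show ?case unfolding PHI_def
  proof (intro allI impI)
    fix Q assume Q: "stationary Q \<and> (\<forall>q\<in>Q. succ_ord q \<in> diag_union T X)"
    then have "\<forall>q\<in>Q. \<exists>a. a < succ_ord q \<and> a \<in> T \<and> succ_ord q \<in> X a"
      unfolding diag_union_def by blast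
    then have "\<exists>h. \<forall>q\<in>Q. h q < succ_ord q \<and> h q \<in> T \<and> succ_ord q \<in> X (h q)"
      by (rule bchoice)
    then obtain h where h0: "\<forall>q\<in>Q. h q < succ_ord q \<and> h q \<in> T \<and> succ_ord q \<in> X (h q)"
      by blast
    then have h: "\<And>q. q \<in> Q \<Longrightarrow> h q < succ_ord q \<and> h q \<in> T \<and> succ_ord q \<in> X (h q)" by blast
    have "\<not> stationary T" using diag.hyps INS unfolding NS_def by blast
    moreover have "{q\<in>Q. h q = q} \<subseteq> T" using h by force
    ultimately have n1: "\<not> stationary {q\<in>Q. h q = q}" using stat_mono by blast
    have "Q = {q\<in>Q. h q = q} \<union> {q\<in>Q. h q \<noteq> q}" by blast
    then have "stationary ({q\<in>Q. h q = q} \<union> {q\<in>Q. h q \<noteq> q})" using Q by simp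
    then have Q2: "stationary {q\<in>Q. h q \<noteq> q}" using stat_un2[OF K] n1 by blast
    have "\<exists>a. stationary {\<xi>\<in>{q\<in>Q. h q \<noteq> q}. h \<xi> = a}"
    proof (rule fodor[OF K Q2])
      fix \<xi> assume "\<xi> \<in> {q\<in>Q. h q \<noteq> q}"
      then have "\<xi> \<in> Q" "h \<xi> \<noteq> \<xi>" by auto
      then have "h \<xi> \<le> \<xi>" "h \<xi> \<noteq> \<xi>" using h succ_le[OF K] by auto
      then show "h \<xi> < \<xi>" by simp
    qed
    then obtain a where a: "stationary {\<xi>\<in>{q\<in>Q. h q \<noteq> q}. h \<xi> = a}" by blast
    then obtain q0 where q0: "q0 \<in> {\<xi>\<in>{q\<in>Q. h q \<noteq> q}. h \<xi> = a}" using stat_nonempty[OF K] by blast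
    then have aT: "a \<in> T" using h by auto
    have sub: "\<forall>q\<in>{\<xi>\<in>{q\<in>Q. h q \<noteq> q}. h \<xi> = a}. succ_ord q \<in> X a" using h by auto
    have "PHI I (X a)" using diag.IH aT by auto
    then obtain Y where Y: "Y \<in> I" "stationary (Bset Y \<inter> {\<xi>\<in>{q\<in>Q. h q \<noteq> q}. h \<xi> = a})"
      using a sub unfolding PHI_def by blast
    have "Bset Y \<inter> {\<xi>\<in>{q\<in>Q. h q \<noteq> q}. h \<xi> = a} \<subseteq> Bset Y \<inter> Q" by blast
    then show "\<exists>Y\<in>I. stationary (Bset Y \<inter> Q)" using stat_mono Y by blast
  qed
qed

theorem theorem3p12:
  fixes I :: "'a::wellorder set set"
  assumes uncountable: "uncountable (UNIV :: 'a set)"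
    and cardinal: "\<forall>x::'a. {..<x} \<prec> (UNIV :: 'a set)"
    and regular: "\<forall>A::'a set. A \<prec> (UNIV :: 'a set) \<longrightarrow> (\<exists>x. \<forall>y\<in>A. y < x)"
    and ideal: "ideal_on I"
    and I_NS: "I \<subseteq> NS"
    and L_in: "Lset \<in> pcl I"
  shows "\<forall>Q. stationary Q \<and> (\<forall>q\<in>Q. is_limit q) \<longrightarrow>
           (\<exists>Y. Y \<subseteq> Lset \<and> Y \<in> I \<and> Bset Y \<subseteq> Q \<and> stationary (Bset Y))"
proof (intro allI impI)
  fix Q :: "'a set"
  assume Q: "stationary Q \<and> (\<forall>q\<in>Q. is_limit q)"
  have K: "KAPPA TYPE('a)" unfolding KAPPA_def using uncountable cardinal regular by blast
  have "PHI I Lset" using main_ind[OF K I_NS L_in] .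
  moreover have "\<forall>q\<in>Q. succ_ord q \<in> Lset" using Q unfolding Lset_def by blast
  ultimately obtain Y where Y: "Y \<in> I" "stationary (Bset Y \<inter> Q)" using Q unfolding PHI_def by blast
  define Y' where "Y' = {y\<in>Y. \<exists>q\<in>Q. y = succ_ord q}"
  have "Y' \<subseteq> Lset" unfolding Y'_def Lset_def using Q by blast
  moreover have "Y' \<in> I"
  proof -
    have sc: "\<forall>A\<in>I. \<forall>B. B \<subseteq> A \<longrightarrow> B \<in> I" using ideal unfolding ideal_on_def by (rule conjunct1)
    have "Y' \<subseteq> Y" unfolding Y'_def by blast
    then show ?thesis using sc Y(1) by blast
  qed
  moreover have "Bset Y' = Bset Y \<inter> Q"
  proof
    show "Bset Y' \<subseteq> Bset Y \<inter> Q"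
    proof
      fix l assume "l \<in> Bset Y'"
      then obtain q where "succ_ord l \<in> Y" "q \<in> Q" "succ_ord l = succ_ord q" unfolding Bset_def Y'_def by blast
      then show "l \<in> Bset Y \<inter> Q" using succ_inj[OF K] unfolding Bset_def by auto
    qed
    show "Bset Y \<inter> Q \<subseteq> Bset Y'" unfolding Bset_def Y'_def by blast
  qed
  ultimately show "\<exists>Y. Y \<subseteq> Lset \<and> Y \<in> I \<and> Bset Y \<subseteq> Q \<and> stationary (Bset Y)"
    using Y(2) by auto
qed

end
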